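(* Let $\sigma:\mathbb{R}\to\mathbb{R}$ be an increasing odd homeomorphism. The group $\Gamma_2(\sigma)$ generated by $h_\sigma^2$ and $v_\sigma^2$ is a free group.
   Context: $h_\sigma(x,y)=(x+\sigma^{-1}(y),y)$ and $v_\sigma(x,y)=(x,\sigma(x)+y)$ are bijections of $\mathbb{R}^2$; the group operation is composition. *)

theory Defs
  imports "HOL-Analysis.Analysis"
begin

definition h_sigma :: "(real \<Rightarrow> real) \<Rightarrow> real \<times> real \<Rightarrow> real \<times> real" where
  "h_sigma \<sigma> = (\<lambda>(x, y). (x + inv \<sigma> y, y))"

definition v_sigma :: "(real \<Rightarrow> real) \<Rightarrow> real \<times> real \<Rightarrow> real \<times> real" where
  "v_sigma \<sigma> = (\<lambda>(x, y). (x, \<sigma> x + y))"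

text \<open>Words in two generators: a letter (g, e) is generator g (True = first, False = second)
  with exponent +1 if e, and -1 otherwise.\<close>

definition letter_eval :: "('a \<Rightarrow> 'a) \<Rightarrow> ('a \<Rightarrow> 'a) \<Rightarrow> bool \<times> bool \<Rightarrow> ('a \<Rightarrow> 'a)" where
  "letter_eval a b l = (let g = (if fst l then a else b) in if snd l then g else inv g)"

definition word_eval :: "('a \<Rightarrow> 'a) \<Rightarrow> ('a \<Rightarrow> 'a) \<Rightarrow> (bool \<times> bool) list \<Rightarrow> ('a \<Rightarrow> 'a)" where
  "word_eval a b w = foldr (\<circ>) (map (letter_eval a b) w) id"

definition reduced_word :: "(bool \<times> bool) list \<Rightarrow> bool" where
  "reduced_word w \<longleftrightarrow>
     (\<forall>i. Suc i < length w \<longrightarrow> \<not> (fst (w ! i) = fst (w ! Suc i) \<and> snd (w ! i) \<noteq> snd (w ! Suc i)))"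

definition freely_generate :: "('a \<Rightarrow> 'a) \<Rightarrow> ('a \<Rightarrow> 'a) \<Rightarrow> bool" where
  "freely_generate a b \<longleftrightarrow> bij a \<and> bij b \<and>
     (\<forall>w. w \<noteq> [] \<and> reduced_word w \<longrightarrow> word_eval a b w \<noteq> id)"

end

theory Submission
  imports Defs
begin

definition sameS :: "real \<Rightarrow> real \<Rightarrow> bool" where
  "sameS x y \<longleftrightarrow> (0 < x \<and> 0 < y) \<or> (x < 0 \<and> y < 0)"

definition oppS :: "real \<Rightarrow> real \<Rightarrow> bool" where
  "oppS x y \<longleftrightarrow> (0 < x \<and> y < 0) \<or> (x < 0 \<and> 0 < y)"

definition Reg :: "(real \<Rightarrow> real) \<Rightarrow> bool \<times> bool \<Rightarrow> real \<times> real \<Rightarrow> bool" where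
  "Reg \<sigma> s p = ((if fst s then \<bar>snd p\<bar> < \<bar>\<sigma> (fst p)\<bar> else \<bar>\<sigma> (fst p)\<bar> < \<bar>snd p\<bar>)
      \<and> (if snd s then sameS (fst p) (snd p) else oppS (fst p) (snd p)))"

lemma sig_facts:
  fixes \<sigma> :: "real \<Rightarrow> real"
  assumes sm: "strict_mono \<sigma>" and odd: "\<And>x. \<sigma> (- x) = - \<sigma> x"
  shows "\<sigma> 0 = 0" "\<And>a b. \<sigma> a < \<sigma> b \<longleftrightarrow> a < b"
    "\<And>a. 0 < \<sigma> a \<longleftrightarrow> 0 < a" "\<And>a. \<sigma> a < 0 \<longleftrightarrow> a < 0"
    "\<And>a b. \<bar>\<sigma> a\<bar> < \<bar>\<sigma> b\<bar> \<longleftrightarrow> \<bar>a\<bar> < \<bar>b\<bar>"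
proof -
  show z: "\<sigma> 0 = 0" using odd[of 0] by simp
  show lt: "\<And>a b. \<sigma> a < \<sigma> b \<longleftrightarrow> a < b" using sm by (simp add: strict_mono_less)
  show "\<And>a. 0 < \<sigma> a \<longleftrightarrow> 0 < a" using lt[of 0] z by metis
  show "\<And>a. \<sigma> a < 0 \<longleftrightarrow> a < 0" using lt[of _ 0] z by metis
  have ab: "\<bar>\<sigma> a\<bar> = \<sigma> \<bar>a\<bar>" for a
    using odd[of a] lt[of a 0] lt[of 0 a] z by (cases "a < 0") (auto simp: abs_if)
  show "\<And>a b. \<bar>\<sigma> a\<bar> < \<bar>\<sigma> b\<bar> \<longleftrightarrow> \<bar>a\<bar> < \<bar>b\<bar>" by (simp add: ab lt)
qed

lemma h2: "h_sigma \<sigma> ^^ 2 = (\<lambda>(x, y). (x + 2 * inv \<sigma> y, y))"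
  by (auto simp: numeral_2_eq_2 h_sigma_def)

lemma v2: "v_sigma \<sigma> ^^ 2 = (\<lambda>(x, y). (x, 2 * \<sigma> x + y))"
  by (auto simp: numeral_2_eq_2 v_sigma_def)

lemma inv_h2:
  assumes "surj \<sigma>"
  shows "inv (\<lambda>(x, y). (x + 2 * inv \<sigma> y, y)) = (\<lambda>(x::real, y::real). (x - 2 * inv \<sigma> y, y))"
  by (rule inv_unique_comp) auto

lemma inv_v2:
  shows "inv (\<lambda>(x, y). (x, 2 * \<sigma> x + y)) = (\<lambda>(x::real, y::real). (x, y - 2 * \<sigma> x))"
  by (rule inv_unique_comp) auto

lemma bij_h2: "bij (\<lambda>(x, y). (x + 2 * inv \<sigma> y, y) :: real \<times> real)"
  by (rule o_bij[where g="\<lambda>(x, y). (x - 2 * inv \<sigma> y, y)"]) auto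

lemma bij_v2: "bij (\<lambda>(x, y). (x, 2 * \<sigma> x + y) :: real \<times> real)"
  by (rule o_bij[where g="\<lambda>(x, y). (x, y - 2 * \<sigma> x)"]) auto


lemma trans_step:
  fixes \<sigma> :: "real \<Rightarrow> real"
  assumes sm: "strict_mono \<sigma>" and odd: "\<And>x. \<sigma> (- x) = - \<sigma> x" and su: "surj \<sigma>"
    and R: "Reg \<sigma> s p" and ne: "s \<noteq> (fst l, \<not> snd l)"
  shows "Reg \<sigma> l (letter_eval (h_sigma \<sigma> ^^ 2) (v_sigma \<sigma> ^^ 2) l p)"
proof -
  note F = sig_facts[OF sm odd]
  obtain x y where p: "p = (x, y)" by force
  define u where "u = inv \<sigma> y"
  have yu: "y = \<sigma> u" unfolding u_def by (simp add: surj_f_inv_f[OF su])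
  obtain g e where l: "l = (g, e)" by force
  obtain g' e' where s: "s = (g', e')" by force
  show ?thesis
  proof (cases g)
    case True
    then have "letter_eval (h_sigma \<sigma> ^^ 2) (v_sigma \<sigma> ^^ 2) l p
       = (if e then (x + 2 * u, \<sigma> u) else (x - 2 * u, \<sigma> u))"
      by (simp add: letter_eval_def l p h2 inv_h2[OF su] u_def[symmetric] yu[symmetric])
    then show ?thesis using R ne True unfolding l s p yu
      apply (simp add: Reg_def sameS_def oppS_def F split: if_splits)
      apply (auto simp: abs_if)
      done
  next
    case False
    then have "letter_eval (h_sigma \<sigma> ^^ 2) (v_sigma \<sigma> ^^ 2) l p
       = (if e then (x, 2 * \<sigma> x + y) else (x, y - 2 * \<sigma> x))"
      by (simp add: letter_eval_def l p v2 inv_v2)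
    then show ?thesis using R ne False F(3,4)[of x] unfolding l s p
      apply (simp add: Reg_def sameS_def oppS_def split: if_splits)
      apply (auto simp: abs_if)
      done
  qed
qed


lemma reduced_tl: "reduced_word (l # w) \<Longrightarrow> reduced_word w"
  unfolding reduced_word_def
proof (intro allI impI)
  fix i assume A: "\<forall>i. Suc i < length (l # w) \<longrightarrow>
       \<not> (fst ((l # w) ! i) = fst ((l # w) ! Suc i) \<and> snd ((l # w) ! i) \<noteq> snd ((l # w) ! Suc i))"
    and "Suc i < length w"
  then show "\<not> (fst (w ! i) = fst (w ! Suc i) \<and> snd (w ! i) \<noteq> snd (w ! Suc i))"
    using A[rule_format, of "Suc i"] by simp
qed

lemma reduced_hd: "reduced_word (l # w) \<Longrightarrow> w \<noteq> [] \<Longrightarrow> hd w \<noteq> (fst l, \<not> snd l)"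
  unfolding reduced_word_def
  apply (drule spec[of _ 0])
  apply (cases w) apply auto
  done

lemma word_step:
  fixes \<sigma> :: "real \<Rightarrow> real"
  assumes sm: "strict_mono \<sigma>" and odd: "\<And>x. \<sigma> (- x) = - \<sigma> x" and su: "surj \<sigma>"
    and R: "Reg \<sigma> s p"
  shows "w \<noteq> [] \<Longrightarrow> reduced_word w \<Longrightarrow> s \<noteq> (fst (last w), \<not> snd (last w)) \<Longrightarrow>
    Reg \<sigma> (hd w) (word_eval (h_sigma \<sigma> ^^ 2) (v_sigma \<sigma> ^^ 2) w p)"
proof (induction w)
  case Nil
  then show ?case by simp
next
  case (Cons l w)
  show ?case
  proof (cases "w = []")
    case True
    then show ?thesis using Cons.prems trans_step[OF sm odd su R, of l]
      by (simp add: word_eval_def)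
  next
    case False
    have IH: "Reg \<sigma> (hd w) (word_eval (h_sigma \<sigma> ^^ 2) (v_sigma \<sigma> ^^ 2) w p)"
      using Cons.IH[OF False reduced_tl[OF Cons.prems(2)]] Cons.prems(3) False by simp
    have "Reg \<sigma> l (letter_eval (h_sigma \<sigma> ^^ 2) (v_sigma \<sigma> ^^ 2) l
             (word_eval (h_sigma \<sigma> ^^ 2) (v_sigma \<sigma> ^^ 2) w p))"
      by (rule trans_step[OF sm odd su IH reduced_hd[OF Cons.prems(2) False]])
    then show ?thesis by (simp add: word_eval_def)
  qed
qed

lemma reg_disj: "Reg \<sigma> s p \<Longrightarrow> Reg \<sigma> t p \<Longrightarrow> s = t"
  by (cases s; cases t) (auto simp: Reg_def sameS_def oppS_def split: if_splits)

theorem proposition1: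
  fixes \<sigma> :: "real \<Rightarrow> real"
  assumes "strict_mono \<sigma>"
    and "\<And>x. \<sigma> (- x) = - \<sigma> x"
    and "\<exists>\<tau>. homeomorphism UNIV UNIV \<sigma> \<tau>"
  shows "freely_generate (h_sigma \<sigma> ^^ 2) (v_sigma \<sigma> ^^ 2)"
proof -
  have su: "surj \<sigma>" using assms(3) unfolding homeomorphism_def by auto
  note F = sig_facts[OF assms(1,2)]
  have s1: "0 < \<sigma> 1" using F(3)[of 1] by simp
  define pt :: "bool \<times> bool \<Rightarrow> real \<times> real" where
    "pt s = (1, if fst s then (if snd s then \<sigma> 1 / 2 else - \<sigma> 1 / 2)
                      else (if snd s then 2 * \<sigma> 1 else - 2 * \<sigma> 1))" for s
  have Rpt: "Reg \<sigma> s (pt s)" for s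
    using s1 by (cases s) (auto simp: pt_def Reg_def sameS_def oppS_def)
  have "word_eval (h_sigma \<sigma> ^^ 2) (v_sigma \<sigma> ^^ 2) w \<noteq> id" if w: "w \<noteq> []" "reduced_word w" for w
  proof
    assume E: "word_eval (h_sigma \<sigma> ^^ 2) (v_sigma \<sigma> ^^ 2) w = id"
    obtain s :: "bool \<times> bool" where s: "s \<noteq> hd w" "s \<noteq> (fst (last w), \<not> snd (last w))"
    proof -
      have "\<exists>s :: bool \<times> bool. s \<noteq> hd w \<and> s \<noteq> (fst (last w), \<not> snd (last w))"
        by (cases "hd w"; cases "last w") (metis (full_types) prod.inject)
      then show ?thesis using that by blast
    qed
    have "Reg \<sigma> (hd w) (word_eval (h_sigma \<sigma> ^^ 2) (v_sigma \<sigma> ^^ 2) w (pt s))"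
      by (rule word_step[OF assms(1,2) su Rpt w s(2)])
    then have "Reg \<sigma> (hd w) (pt s)" using E by simp
    then show False using reg_disj[OF Rpt] s(1) by metis
  qed
  then show ?thesis
    unfolding freely_generate_def h2 v2 using bij_h2 bij_v2 by blast
qed

end
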